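(* Let $N,k$ be positive integers and $\lambda$ a partition with $l(\lambda)\le N$. Then: (1) $c'_\lambda(q,t)$ is nonzero at $q^kt^N=1$. (2) $c_\lambda(q,t)$ is zero at $q^kt^N=1$ if and only if $l(\lambda^t)>k$ and $l(\overline{\lambda}^t)\le k$. Moreover, in that case exactly one of the factors $1-q^{a(s)}t^{l(s)+1}$, $s\in\lambda$, becomes zero at $q^kt^N=1$ (the order of vanishing is $1$).
   Context: Partitions $\lambda=(\lambda_1\ge\lambda_2\ge\cdots)$ are identified with Young diagrams $\{(i,j): i\ge1,\ 1\le j\le\lambda_i\}$; $\lambda^t$ is the transpose partition, $l(\lambda)$ the number of nonzero parts (so $l(\lambda^t)=\lambda_1$), $|\lambda|=\sum_i\lambda_i$. For a box $s=(i,j)\in\lambda$: arm $a(s)=\lambda_i-j$, leg $l(s)=\lambda^t_j-i$. Set $c_\lambda(q,t)=\prod_{s\in\lambda}(1-q^{a(s)}t^{l(s)+1})$ and $c'_\lambda(q,t)=\prod_{s\in\lambda}(1-q^{a(s)+1}t^{l(s)})$. For a partition $\lambda$ with $l(\lambda)\le N$, $\overline{\lambda}$ denotes the partition $(\lambda_1-\lambda_N,\lambda_2-\lambda_N,\dots,\lambda_{N-1}-\lambda_N)$ obtained by removing all columns of height $N$ (so $l(\overline\lambda)<N$). Specialization at $q^kt^N=1$: let $m=\gcd(k,N)$, fix a primitive $m$-th root of unity $\omega$ and $\omega_1\in\mathbb C$ with $\omega_1^{N/m}=\omega$. Let $v$ be an indeterminate and consider the ring homomorphism $\mathbb Z[q^{\pm1},t^{\pm1}]\to\mathbb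 C(v)$, $q\mapsto v^N$, $t\mapsto v^{-k}\omega_1$. An element is said to be zero (resp. nonzero) at $q^kt^N=1$ if its image under this homomorphism is zero (resp. nonzero). *)

theory Defs
  imports Complex_Main "HOL-Computational_Algebra.Polynomial" "HOL-Computational_Algebra.Fraction_Field"
begin

definition is_partition :: "nat list \<Rightarrow> bool" where
  "is_partition lam \<longleftrightarrow> sorted_wrt (\<ge>) lam \<and> 0 \<notin> set lam"

(* lambda_i, 1-based, zero beyond the length *)
definition part :: "nat list \<Rightarrow> nat \<Rightarrow> nat" where
  "part lam i = (if 1 \<le> i \<and> i \<le> length lam then lam ! (i - 1) else 0)"

definition diagram :: "nat list \<Rightarrow> (nat \<times> nat) set" where
  "diagram lam = {(i, j). 1 \<le> i \<and> 1 \<le> j \<and> j \<le> part lam i}"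

definition conjpart :: "nat list \<Rightarrow> nat \<Rightarrow> nat" where
  "conjpart lam j = length (filter (\<lambda>x. j \<le> x) lam)"

(* the transpose partition lambda^t, as a list of its nonzero parts *)
definition ptrans :: "nat list \<Rightarrow> nat list" where
  "ptrans lam = map (conjpart lam) [1..<Suc (part lam 1)]"

definition arm :: "nat list \<Rightarrow> nat \<times> nat \<Rightarrow> nat" where
  "arm lam s = part lam (fst s) - snd s"

definition leg :: "nat list \<Rightarrow> nat \<times> nat \<Rightarrow> nat" where
  "leg lam s = conjpart lam (snd s) - fst s"

definition c_lam :: "nat list \<Rightarrow> 'a::comm_ring_1 \<Rightarrow> 'a \<Rightarrow> 'a" where
  "c_lam lam q t = (\<Prod>s\<in>diagram lam. 1 - q ^ arm lam s * t ^ (leg lam s + 1))"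

definition c'_lam :: "nat list \<Rightarrow> 'a::comm_ring_1 \<Rightarrow> 'a \<Rightarrow> 'a" where
  "c'_lam lam q t = (\<Prod>s\<in>diagram lam. 1 - q ^ (arm lam s + 1) * t ^ leg lam s)"

(* overline lambda: remove all columns of height N (nonzero parts of
   (lambda_1 - lambda_N, ..., lambda_{N-1} - lambda_N)) *)
definition bar :: "nat \<Rightarrow> nat list \<Rightarrow> nat list" where
  "bar N lam = filter (\<lambda>x. x \<noteq> 0) (map (\<lambda>i. part lam i - part lam N) [1..<N])"

definition primitive_root :: "nat \<Rightarrow> complex \<Rightarrow> bool" where
  "primitive_root m w \<longleftrightarrow> w ^ m = 1 \<and> (\<forall>d. 0 < d \<and> d < m \<longrightarrow> w ^ d \<noteq> 1)"

(* The field C(v) is complex poly fract; v is the indeterminate *)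
definition var_v :: "complex poly fract" where
  "var_v = Fract [:0, 1:] 1"

definition specQ :: "nat \<Rightarrow> complex poly fract" where
  "specQ N = var_v ^ N"

definition specT :: "nat \<Rightarrow> complex \<Rightarrow> complex poly fract" where
  "specT k w1 = inverse var_v ^ k * Fract [:w1:] 1"

end

theory Submission
  imports Defs
begin

lemma var_pow: "var_v ^ n = Fract (monom 1 n) 1"
proof (induction n)
  case 0 then show ?case by (simp add: One_fract_def monom_0 one_pCons)
next
  case (Suc n) then show ?case
    by (simp add: var_v_def mult_monom monom_Suc)
qed

lemma const_pow: "Fract [:c:] 1 ^ n = Fract [:c^n:] 1"
  by (induction n) (auto simp: One_fract_def one_pCons mult.commute)

lemma var_nz: "var_v \<noteq> 0"
  by (simp add: var_v_def Zero_fract_def eq_fract)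

lemma key_eq:
  fixes c :: complex
  shows "(1 - var_v ^ A * (inverse var_v ^ B * Fract [:c:] 1) = 0) \<longleftrightarrow> (A = B \<and> c = 1)"
proof -
  have "(1 - var_v ^ A * (inverse var_v ^ B * Fract [:c:] 1) = 0) \<longleftrightarrow>
        var_v ^ B = var_v ^ A * Fract [:c:] 1"
    using var_nz by (auto simp: field_simps power_inverse)
  also have "\<dots> \<longleftrightarrow> monom 1 B = monom 1 A * [:c:]"
    by (simp add: var_pow eq_fract)
  also have "monom 1 A * [:c:] = monom c A"
    using mult_monom[of 1 A c 0] by (simp add: monom_0)
  also have "(monom 1 B = monom c A) \<longleftrightarrow> (A = B \<and> c = 1)"
    by (auto simp: monom_eq_iff')
  finally show ?thesis .
qed

lemma factor_eq:
  fixes w :: complex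
  shows "(1 - specQ N ^ a * specT k w ^ L = 0) \<longleftrightarrow> (N * a = k * L \<and> w ^ L = 1)"
proof -
  have "specQ N ^ a * specT k w ^ L = var_v ^ (N*a) * (inverse var_v ^ (k*L) * Fract [:w^L:] 1)"
    by (simp add: specQ_def specT_def power_mult_distrib const_pow flip: power_mult)
  then show ?thesis using key_eq by simp
qed
lemma sorted_nth:
  assumes "is_partition lam" "i \<le> j" "j < length lam"
  shows "lam ! j \<le> lam ! i"
proof (cases "i = j")
  case False
  then have "i < j" using assms(2) by simp
  then show ?thesis using assms(1,3) sorted_wrt_nth_less[of "(\<ge>)" lam i j]
    unfolding is_partition_def by simp
qed simp

lemma part_le1:
  assumes "is_partition lam" "1 \<le> i"
  shows "part lam i \<le> part lam 1"
  using assms sorted_nth[OF assms(1), of 0 "i-1"] by (auto simp: part_def)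

lemma diagram_finite: "finite (diagram lam)"
proof -
  have "diagram lam \<subseteq> {..length lam} \<times> {..sum_list lam}"
  proof
    fix s assume "s \<in> diagram lam"
    then obtain i j where s: "s = (i,j)" "1 \<le> i" "1 \<le> j" "j \<le> part lam i"
      by (auto simp: diagram_def)
    then have "i \<le> length lam" by (auto simp: part_def split: if_splits)
    moreover have "part lam i \<le> sum_list lam"
      using s by (auto simp: part_def member_le_sum_list)
    ultimately show "s \<in> {..length lam} \<times> {..sum_list lam}" using s by auto
  qed
  then show ?thesis by (rule finite_subset) auto
qed

lemma conjpart_le: "conjpart lam j \<le> length lam"
  by (simp add: conjpart_def)

lemma box_conj:
  assumes "is_partition lam" "(i,j) \<in> diagram lam"
  shows "i \<le> conjpart lam j"
proof -
  from assms(2) have ij: "1 \<le> i" "1 \<le> j" "j \<le> part lam i" by (auto simp: diagram_def)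
  then have il: "i \<le> length lam" by (auto simp: part_def split: if_splits)
  have all: "\<forall>x\<in>set (take i lam). j \<le> x"
  proof
    fix x assume "x \<in> set (take i lam)"
    then obtain p where p: "p < i" "x = lam ! p" using il
      by (auto simp: in_set_conv_nth)
    have "lam ! (i-1) \<le> lam ! p" using sorted_nth[OF assms(1), of p "i-1"] p il by auto
    moreover have "part lam i = lam ! (i-1)" using ij il by (simp add: part_def)
    ultimately show "j \<le> x" using ij p by auto
  qed
  have "i = length (filter (\<lambda>x. j \<le> x) (take i lam))"
    using all il by (simp add: filter_True)
  also have "\<dots> \<le> length (filter (\<lambda>x. j \<le> x) lam)"
    by (metis append_take_drop_id filter_append le_add1 length_append)
  finally show ?thesis by (simp add: conjpart_def)
qed

lemma conj_eq_N:
  assumes "is_partition lam" "length lam \<le> N" "1 \<le> j" "0 < N"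
  shows "conjpart lam j = N \<longleftrightarrow> j \<le> part lam N"
proof
  assume h: "conjpart lam j = N"
  have "length (filter (\<lambda>x. j \<le> x) lam) = length lam"
    using h assms(2) conjpart_le[of lam j] by (simp add: conjpart_def)
  then have "\<forall>x\<in>set lam. j \<le> x" by (metis length_filter_less less_irrefl)
  moreover have "length lam = N" using h assms(2) conjpart_le[of lam j] by simp
  moreover have "N \<noteq> 0" using assms by simp
  ultimately show "j \<le> part lam N" by (simp add: part_def)
next
  assume h: "j \<le> part lam N"
  then have NL: "1 \<le> N" "N \<le> length lam" using assms by (auto simp: part_def split: if_splits)
  then have LN: "length lam = N" using assms by simp
  have "\<forall>x\<in>set lam. j \<le> x"
  proof
    fix x assume "x \<in> set lam"
    then obtain p where p: "p < length lam" "x = lam ! p" by (auto simp: in_set_conv_nth)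
    have "lam ! (N-1) \<le> lam ! p" using sorted_nth[OF assms(1), of p "N-1"] p LN by auto
    then show "j \<le> x" using h NL p by (auto simp: part_def)
  qed
  then show "conjpart lam j = N" using LN by (simp add: conjpart_def filter_True)
qed

lemma bar_part:
  assumes "is_partition lam" "1 \<le> N"
  shows "part (bar N lam) 1 = part lam 1 - part lam N"
proof (cases "N = 1")
  case True then show ?thesis by (simp add: bar_def part_def)
next
  case False
  then have "[1..<N] = 1 # [Suc (Suc 0)..<N]" using assms by (simp add: upt_conv_Cons)
  then have b: "bar N lam = (if part lam 1 - part lam N = 0 then [] else [part lam 1 - part lam N])
     @ filter (\<lambda>x. x \<noteq> 0) (map (\<lambda>i. part lam i - part lam N) [Suc (Suc 0)..<N])"
    by (simp add: bar_def)
  show ?thesis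
  proof (cases "part lam 1 - part lam N = 0")
    case True
    have "filter (\<lambda>x. x \<noteq> 0) (map (\<lambda>i. part lam i - part lam N) [Suc (Suc 0)..<N]) = []"
    proof -
      have "part lam i - part lam N = 0" if "i \<in> set [Suc (Suc 0)..<N]" for i
        using part_le1[OF assms(1), of i] that True by simp
      then show ?thesis by (simp add: filter_empty_conv)
    qed
    then show ?thesis using b True by (simp add: part_def)
  next
    case False then show ?thesis using b by (simp add: part_def)
  qed
qed

lemma nt:
  fixes \<omega> \<omega>1 :: complex
  assumes "0 < N" "0 < k" "primitive_root (gcd k N) \<omega>" "\<omega>1 ^ (N div gcd k N) = \<omega>"
    and "N * a = k * L" "\<omega>1 ^ L = 1"
  shows "N dvd L"
proof -
  define m where "m = gcd k N"
  have m0: "0 < m" using assms by (simp add: m_def)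
  define N' where "N' = N div m"
  define k' where "k' = k div m"
  have NN: "N = N' * m" by (simp add: N'_def m_def)
  have kk: "k = k' * m" by (simp add: k'_def m_def)
  have cop: "coprime k' N'" unfolding k'_def N'_def m_def
    using div_gcd_coprime assms(2) by blast
  have "N' * a = k' * L" using assms(5) NN kk m0 by (simp add: mult.commute mult.left_commute)
  then have "N' dvd k' * L" by (metis dvd_triv_left)
  then have "N' dvd L" using cop by (metis coprime_commute coprime_dvd_mult_right_iff)
  then obtain r where r: "L = N' * r" by blast
  have wr: "\<omega> ^ r = 1" using assms(4,6) r by (simp add: N'_def m_def power_mult)
  have wm: "\<omega> ^ m = 1" using assms(3) by (simp add: primitive_root_def m_def)
  have "\<omega> ^ r = \<omega> ^ (r mod m)"
  proof -
    have e: "r = m * (r div m) + r mod m" by simp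
    have "\<omega> ^ r = \<omega> ^ (m * (r div m)) * \<omega> ^ (r mod m)"
      by (subst e) (simp only: power_add)
    also have "\<dots> = (\<omega> ^ m) ^ (r div m) * \<omega> ^ (r mod m)" by (simp only: power_mult)
    finally have "\<omega> ^ r = (\<omega> ^ m) ^ (r div m) * \<omega> ^ (r mod m)" .
    then show ?thesis using wm by simp
  qed
  then have "\<omega> ^ (r mod m) = 1" using wr by simp
  then have "r mod m = 0"
  proof (rule contrapos_pp)
    assume "r mod m \<noteq> 0"
    moreover have "r mod m < m" using m0 by simp
    ultimately show "\<omega> ^ (r mod m) \<noteq> 1" using assms(3) unfolding primitive_root_def m_def by auto
  qed
  then obtain q where "r = m * q" by blast
  then have "L = N * q" using r NN by simp
  then show ?thesis by simp
qed

lemma w1N: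
  fixes \<omega> \<omega>1 :: complex
  assumes "0 < N" "primitive_root (gcd k N) \<omega>" "\<omega>1 ^ (N div gcd k N) = \<omega>"
  shows "\<omega>1 ^ N = 1"
proof -
  have "N = N div gcd k N * gcd k N" by simp
  then have "\<omega>1 ^ N = \<omega> ^ gcd k N" using assms(3) by (metis power_mult)
  then show ?thesis using assms(2) by (simp add: primitive_root_def)
qed

theorem lemma2p3:
  fixes N k :: nat and lam :: "nat list" and \<omega> \<omega>\<^sub>1 :: complex
  assumes "0 < N" and "0 < k"
    and "is_partition lam" and "length lam \<le> N"
    and "primitive_root (gcd k N) \<omega>" and "\<omega>\<^sub>1 ^ (N div gcd k N) = \<omega>"
  shows "c'_lam lam (specQ N) (specT k \<omega>\<^sub>1) \<noteq> 0
    \<and> (c_lam lam (specQ N) (specT k \<omega>\<^sub>1) = 0 \<longleftrightarrow>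
           length (ptrans lam) > k \<and> length (ptrans (bar N lam)) \<le> k)
    \<and> (c_lam lam (specQ N) (specT k \<omega>\<^sub>1) = 0 \<longrightarrow>
           card {s \<in> diagram lam.
             1 - specQ N ^ arm lam s * specT k \<omega>\<^sub>1 ^ (leg lam s + 1) = 0} = 1)"
proof -
  note fin = diagram_finite[of lam]
  have legN: "leg lam s < N" if "s \<in> diagram lam" for s
  proof -
    obtain i j where s: "s = (i,j)" by (cases s)
    have "1 \<le> i" using that s by (auto simp: diagram_def)
    moreover have "conjpart lam j \<le> N" using conjpart_le[of lam j] assms(4) by simp
    ultimately show ?thesis using s assms(1) by (simp add: leg_def)
  qed
  have P1: "c'_lam lam (specQ N) (specT k \<omega>\<^sub>1) \<noteq> 0"
    unfolding c'_lam_def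
  proof (subst prod_zero_iff[OF fin], rule notI)
    assume "\<exists>s\<in>diagram lam. 1 - specQ N ^ (arm lam s + 1) * specT k \<omega>\<^sub>1 ^ leg lam s = 0"
    then obtain s where s: "s \<in> diagram lam"
      and z: "1 - specQ N ^ (arm lam s + 1) * specT k \<omega>\<^sub>1 ^ leg lam s = 0"
      by blast
    have e: "N * (arm lam s + 1) = k * leg lam s" "\<omega>\<^sub>1 ^ leg lam s = 1"
      using z factor_eq[of N "arm lam s + 1" k \<omega>\<^sub>1 "leg lam s"] by blast+
    have "N dvd leg lam s" using nt[OF assms(1,2,5,6) e] .
    then have "leg lam s = 0" using legN[OF s] by (cases "leg lam s = 0") (auto dest: dvd_imp_le)
    then show False using e(1) assms(1) by simp
  qed
  define p1 where "p1 = part lam 1"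
  define pN where "pN = part lam N"
  define Z where "Z = {s \<in> diagram lam.
             1 - specQ N ^ arm lam s * specT k \<omega>\<^sub>1 ^ (leg lam s + 1) = 0}"
  have key: "(1 - specQ N ^ arm lam s * specT k \<omega>\<^sub>1 ^ (leg lam s + 1) = 0) \<longleftrightarrow>
      (fst s = 1 \<and> arm lam s = k \<and> conjpart lam (snd s) = N)"
    if sd: "s \<in> diagram lam" for s
  proof -
    obtain i j where s: "s = (i,j)" by (cases s)
    have i1: "1 \<le> i" using sd s by (auto simp: diagram_def)
    have ic: "i \<le> conjpart lam j" using box_conj[OF assms(3)] sd s by simp
    have cN: "conjpart lam j \<le> N" using conjpart_le[of lam j] assms(4) by simp
    show ?thesis
    proof
      assume "1 - specQ N ^ arm lam s * specT k \<omega>\<^sub>1 ^ (leg lam s + 1) = 0"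
      then have e: "N * arm lam s = k * (leg lam s + 1)" "\<omega>\<^sub>1 ^ (leg lam s + 1) = 1"
        using factor_eq[of N "arm lam s" k \<omega>\<^sub>1 "leg lam s + 1"] by blast+
      have "N dvd leg lam s + 1" using nt[OF assms(1,2,5,6) e] .
      then have "N \<le> leg lam s + 1" by (rule dvd_imp_le) simp
      then have l1: "leg lam s + 1 = N" using legN[OF sd] by simp
      then have "N * arm lam s = N * k" using e by simp
      then have "arm lam s = k" using assms(1) by simp
      moreover have "conjpart lam j - i + 1 = N" using l1 s by (simp add: leg_def)
      then have "i = 1 \<and> conjpart lam j = N" using i1 ic cN by linarith
      ultimately show "fst s = 1 \<and> arm lam s = k \<and> conjpart lam (snd s) = N" using s by simp
    next
      assume h: "fst s = 1 \<and> arm lam s = k \<and> conjpart lam (snd s) = N"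
      then have "leg lam s + 1 = N" using s assms(1) by (simp add: leg_def)
      then show "1 - specQ N ^ arm lam s * specT k \<omega>\<^sub>1 ^ (leg lam s + 1) = 0"
        using h w1N[OF assms(1,5,6)] factor_eq[of N "arm lam s" k \<omega>\<^sub>1 "leg lam s + 1"] by simp
    qed
  qed
  have Zeq: "Z = (if k < p1 \<and> p1 - k \<le> pN then {(1, p1 - k)} else {})"
  proof -
    have "Z = {s \<in> diagram lam. fst s = 1 \<and> arm lam s = k \<and> conjpart lam (snd s) = N}"
      unfolding Z_def
    proof (rule Collect_cong)
      fix s show "(s \<in> diagram lam \<and> 1 - specQ N ^ arm lam s * specT k \<omega>\<^sub>1 ^ (leg lam s + 1) = 0) =
        (s \<in> diagram lam \<and> fst s = 1 \<and> arm lam s = k \<and> conjpart lam (snd s) = N)"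
        using key[of s] by blast
    qed
    also have "\<dots> = (if k < p1 \<and> p1 - k \<le> pN then {(1, p1 - k)} else {})"
    proof (intro set_eqI iffI)
      fix s :: "nat \<times> nat" assume "s \<in> {s \<in> diagram lam. fst s = 1 \<and> arm lam s = k \<and> conjpart lam (snd s) = N}"
      then obtain j where s: "s = (1,j)" "1 \<le> j" "j \<le> p1" "p1 - j = k" "conjpart lam j = N"
        by (cases s) (auto simp: diagram_def arm_def p1_def)
      then have "j \<le> pN" using conj_eq_N[OF assms(3,4) _ assms(1)] by (simp add: pN_def)
      then show "s \<in> (if k < p1 \<and> p1 - k \<le> pN then {(1, p1 - k)} else {})"
        using s by auto
    next
      fix s :: "nat \<times> nat" assume "s \<in> (if k < p1 \<and> p1 - k \<le> pN then {(1, p1 - k)} else {})"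
      then have s: "s = (1, p1 - k)" "k < p1" "p1 - k \<le> pN" by (auto split: if_splits)
      have "conjpart lam (p1 - k) = N" using conj_eq_N[OF assms(3,4) _ assms(1)] s by (simp add: pN_def)
      then show "s \<in> {s \<in> diagram lam. fst s = 1 \<and> arm lam s = k \<and> conjpart lam (snd s) = N}"
        using s by (auto simp: diagram_def arm_def p1_def)
    qed
    finally show ?thesis .
  qed
  have cz: "c_lam lam (specQ N) (specT k \<omega>\<^sub>1) = 0 \<longleftrightarrow> Z \<noteq> {}"
    unfolding c_lam_def Z_def by (subst prod_zero_iff[OF fin]) blast
  have l1: "length (ptrans lam) = p1" by (simp add: ptrans_def p1_def)
  have l2: "length (ptrans (bar N lam)) = p1 - pN"
  proof -
    have "length (ptrans (bar N lam)) = part (bar N lam) 1" by (simp add: ptrans_def)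
    also have "\<dots> = p1 - pN" using bar_part[OF assms(3), of N] assms(1) by (simp add: p1_def pN_def)
    finally show ?thesis .
  qed
  have P2: "c_lam lam (specQ N) (specT k \<omega>\<^sub>1) = 0 \<longleftrightarrow>
           length (ptrans lam) > k \<and> length (ptrans (bar N lam)) \<le> k"
    using cz Zeq l1 l2 by auto
  have P3: "c_lam lam (specQ N) (specT k \<omega>\<^sub>1) = 0 \<longrightarrow> card Z = 1"
    using cz Zeq by auto
  show ?thesis using P1 P2 P3 unfolding Z_def by blast
qed

end
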